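(* For the fractional scheduling problem without payments of a single task on $n$ machines, the proportional mechanism has approximation ratio $1$. When the proportional mechanism is run independently for each of $m$ tasks, its approximation ratio (for the fractional makespan) is at least $m$.
   Context: Fractional scheduling without payments: $n$ machines, $m$ divisible tasks; machine $i$ has private true times $t_{i,j}>0$ and declares $\hat t_{i,j}>0$. A mechanism outputs fractions $\alpha_{i,j}\in[0,1]$ with $\sum_i\alpha_{i,j}=1$ for each task $j$. Machines are bound by their declarations: machine $i$'s cost is $C_i=\sum_j\alpha_{i,j}\max\{\hat t_{i,j},t_{i,j}\}$ and the fractional makespan is $\max_iC_i$. The proportional mechanism for a single task with declarations $\hat t_1,\dots,\hat t_n$ gives machine $i$ the fraction $\alpha_i=\hat t_i^{-1}/\sum_{k=1}^n\hat t_k^{-1}$; for $m$ tasks it does this separately for each task $j$ using the declarations $\hat t_{1,j},\dots,\hat t_{n,j}$. (This mechanism is truthful.) The approximation ratio is the supremum over true instances $\mathbf t$ of the fractional makespan under truthful reports $\hat{\mathbf t}=\mathbf t$ divided by the optimal fractional makespan $\min_\alpha\max_i\sum_j\alpha_{i,j}t_{i,j}$. *)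

theory Defs
  imports "HOL-Analysis.Analysis"
begin

text \<open>Machines are indexed by i < n, tasks by j < m. Time matrices and fraction
matrices are functions nat => nat => real; only entries with i < n, j < m matter.\<close>

definition valid_times :: "nat \<Rightarrow> nat \<Rightarrow> (nat \<Rightarrow> nat \<Rightarrow> real) \<Rightarrow> bool" where
  "valid_times n m t \<longleftrightarrow> (\<forall>i<n. \<forall>j<m. t i j > 0)"

definition feasible_alloc :: "nat \<Rightarrow> nat \<Rightarrow> (nat \<Rightarrow> nat \<Rightarrow> real) \<Rightarrow> bool" where
  "feasible_alloc n m \<alpha> \<longleftrightarrow>
     (\<forall>i<n. \<forall>j<m. 0 \<le> \<alpha> i j \<and> \<alpha> i j \<le> 1) \<and> (\<forall>j<m. (\<Sum>i<n. \<alpha> i j) = 1)"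

text \<open>Cost of machine i when bound by declarations th and true times t.\<close>
definition machine_cost ::
  "nat \<Rightarrow> (nat \<Rightarrow> nat \<Rightarrow> real) \<Rightarrow> (nat \<Rightarrow> nat \<Rightarrow> real) \<Rightarrow> (nat \<Rightarrow> nat \<Rightarrow> real) \<Rightarrow> nat \<Rightarrow> real" where
  "machine_cost m \<alpha> th t i = (\<Sum>j<m. \<alpha> i j * max (th i j) (t i j))"

definition frac_makespan ::
  "nat \<Rightarrow> nat \<Rightarrow> (nat \<Rightarrow> nat \<Rightarrow> real) \<Rightarrow> (nat \<Rightarrow> nat \<Rightarrow> real) \<Rightarrow> (nat \<Rightarrow> nat \<Rightarrow> real) \<Rightarrow> real" where
  "frac_makespan n m \<alpha> th t = Max ((\<lambda>i. machine_cost m \<alpha> th t i) ` {..<n})"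

definition opt_frac_makespan :: "nat \<Rightarrow> nat \<Rightarrow> (nat \<Rightarrow> nat \<Rightarrow> real) \<Rightarrow> real" where
  "opt_frac_makespan n m t =
     Inf ((\<lambda>\<alpha>. Max ((\<lambda>i. \<Sum>j<m. \<alpha> i j * t i j) ` {..<n})) ` {\<alpha>. feasible_alloc n m \<alpha>})"

definition prop_mech :: "nat \<Rightarrow> (nat \<Rightarrow> nat \<Rightarrow> real) \<Rightarrow> nat \<Rightarrow> nat \<Rightarrow> real" where
  "prop_mech n th i j = inverse (th i j) / (\<Sum>k<n. inverse (th k j))"

text \<open>Approximation ratio of the proportional mechanism (supremum over true instances,
truthful reports th = t), as an extended real.\<close>
definition prop_approx_ratio :: "nat \<Rightarrow> nat \<Rightarrow> ereal" where
  "prop_approx_ratio n m =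
     (SUP t\<in>{t. valid_times n m t}.
        ereal (frac_makespan n m (prop_mech n t) t t / opt_frac_makespan n m t))"

end

theory Submission
  imports Defs
begin

lemma img_const:
  assumes "\<And>x. x \<in> A \<Longrightarrow> f x = c" "a \<in> A"
  shows "f ` A = {c}"
  using assms by (auto intro!: rev_image_eqI[of a])

lemma S_pos:
  assumes "valid_times n m t" "j < m" "n \<ge> 1"
  shows "(\<Sum>k<n. inverse (t k j)) > 0"
proof -
  have "\<forall>k\<in>{..<n}. inverse (t k j) > 0" using assms unfolding valid_times_def by auto
  moreover have "{..<n} \<noteq> {}" using assms(3) by (auto simp: lessThan_empty_iff)
  ultimately show ?thesis by (intro sum_pos) auto
qed

lemma prop_feasible:
  assumes "valid_times n m t" "n \<ge> 1"
  shows "feasible_alloc n m (prop_mech n t)"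
  unfolding feasible_alloc_def
proof (intro conjI allI impI)
  fix i j assume ij: "i < n" "j < m"
  have S: "(\<Sum>k<n. inverse (t k j)) > 0" using S_pos assms ij by blast
  have tp: "t i j > 0" using assms ij unfolding valid_times_def by auto
  show "0 \<le> prop_mech n t i j" unfolding prop_mech_def using S tp by simp
  have "inverse (t i j) \<le> (\<Sum>k<n. inverse (t k j))"
    using ij assms unfolding valid_times_def
    by (intro member_le_sum) (auto simp: less_imp_le)
  then show "prop_mech n t i j \<le> 1" unfolding prop_mech_def using S by simp
next
  fix j assume j: "j < m"
  have S: "(\<Sum>k<n. inverse (t k j)) > 0" using S_pos assms j by blast
  show "(\<Sum>i<n. prop_mech n t i j) = 1" unfolding prop_mech_def
    using S by (simp add: sum_divide_distrib[symmetric])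
qed

lemma prop_cost_term:
  assumes "valid_times n m t" "n \<ge> 1" "i < n" "j < m"
  shows "prop_mech n t i j * t i j = 1 / (\<Sum>k<n. inverse (t k j))"
proof -
  have tp: "t i j > 0" using assms unfolding valid_times_def by auto
  then show ?thesis unfolding prop_mech_def by (simp add: field_simps)
qed

lemma prop_cost:
  assumes "valid_times n m t" "n \<ge> 1" "i < n"
  shows "machine_cost m (prop_mech n t) t t i = (\<Sum>j<m. 1 / (\<Sum>k<n. inverse (t k j)))"
  unfolding machine_cost_def using prop_cost_term[OF assms(1,2,3)] by (intro sum.cong) auto

lemma prop_makespan:
  assumes "valid_times n m t" "n \<ge> 1"
  shows "frac_makespan n m (prop_mech n t) t t = (\<Sum>j<m. 1 / (\<Sum>k<n. inverse (t k j)))"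
proof -
  have "(\<lambda>i. machine_cost m (prop_mech n t) t t i) ` {..<n} = {\<Sum>j<m. 1 / (\<Sum>k<n. inverse (t k j))}"
    using prop_cost[OF assms] assms(2) by (intro img_const[of _ _ _ 0]) auto
  then show ?thesis unfolding frac_makespan_def by simp
qed

lemma opt_lb:
  assumes "valid_times n m t" "m \<ge> 1" "n \<ge> 1" "feasible_alloc n m \<alpha>"
  shows "1 / (\<Sum>k<n. inverse (t k 0)) \<le> Max ((\<lambda>i. \<Sum>j<m. \<alpha> i j * t i j) ` {..<n})"
proof -
  define M where "M = Max ((\<lambda>i. \<Sum>j<m. \<alpha> i j * t i j) ` {..<n})"
  have S: "(\<Sum>k<n. inverse (t k 0)) > 0" using S_pos assms by auto
  have b: "\<alpha> i 0 \<le> M * inverse (t i 0)" if i: "i < n" for i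
  proof -
    have tp: "t i 0 > 0" using assms i unfolding valid_times_def by auto
    have "\<alpha> i 0 * t i 0 \<le> (\<Sum>j<m. \<alpha> i j * t i j)"
      using assms i unfolding valid_times_def feasible_alloc_def
      by (intro member_le_sum) (auto simp: less_imp_le)
    also have "\<dots> \<le> M" unfolding M_def using i by (intro Max_ge) auto
    finally show ?thesis using tp by (simp add: field_simps)
  qed
  have "1 = (\<Sum>i<n. \<alpha> i 0)" using assms unfolding feasible_alloc_def by auto
  also have "\<dots> \<le> (\<Sum>i<n. M * inverse (t i 0))" using b by (intro sum_mono) auto
  also have "\<dots> = M * (\<Sum>i<n. inverse (t i 0))" by (simp add: sum_distrib_left)
  finally have "1 \<le> M * (\<Sum>i<n. inverse (t i 0))" .
  then show ?thesis using S unfolding M_def[symmetric] by (simp add: field_simps)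
qed

lemma opt_ge:
  assumes "valid_times n m t" "m \<ge> 1" "n \<ge> 1"
  shows "1 / (\<Sum>k<n. inverse (t k 0)) \<le> opt_frac_makespan n m t"
  unfolding opt_frac_makespan_def
  using prop_feasible[OF assms(1,3)] opt_lb[OF assms]
  by (intro cInf_greatest) auto

lemma opt_le:
  assumes "valid_times n m t" "m \<ge> 1" "n \<ge> 1" "feasible_alloc n m \<alpha>"
  shows "opt_frac_makespan n m t \<le> Max ((\<lambda>i. \<Sum>j<m. \<alpha> i j * t i j) ` {..<n})"
  unfolding opt_frac_makespan_def
proof (rule cInf_lower)
  show "bdd_below ((\<lambda>\<alpha>. Max ((\<lambda>i. \<Sum>j<m. \<alpha> i j * t i j) ` {..<n})) ` {\<alpha>. feasible_alloc n m \<alpha>})"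
    using opt_lb[OF assms(1-3)] by (intro bdd_belowI2) auto
qed (use assms in auto)

lemma part1:
  assumes "valid_times n 1 t" "n \<ge> 1"
  shows "frac_makespan n 1 (prop_mech n t) t t / opt_frac_makespan n 1 t = 1"
proof -
  define S where "S = (\<Sum>k<n. inverse (t k 0))"
  have Sp: "S > 0" unfolding S_def using S_pos assms by auto
  have mk: "frac_makespan n 1 (prop_mech n t) t t = 1 / S"
    using prop_makespan[OF assms] unfolding S_def by simp
  have "opt_frac_makespan n 1 t \<le> Max ((\<lambda>i. \<Sum>j<1. prop_mech n t i j * t i j) ` {..<n})"
    using opt_le[OF assms(1) _ assms(2) prop_feasible[OF assms]] by simp
  also have "(\<lambda>i. \<Sum>j<1. prop_mech n t i j * t i j) ` {..<n} = {1/S}"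
    using prop_cost_term[OF assms(1,2)] assms(2) unfolding S_def by (intro img_const[of _ _ _ 0]) auto
  finally have "opt_frac_makespan n 1 t \<le> 1/S" by simp
  moreover have "1/S \<le> opt_frac_makespan n 1 t" using opt_ge[OF assms(1) _ assms(2)] unfolding S_def by simp
  ultimately have "opt_frac_makespan n 1 t = 1/S" by linarith
  then show ?thesis using mk Sp by simp
qed

definition diag :: "real \<Rightarrow> nat \<Rightarrow> nat \<Rightarrow> real" where
  "diag L i j = (if i = j then 1 else L)"

lemma part2:
  assumes "1 \<le> m" "m \<le> n" "L \<ge> 1"
  shows "valid_times n m (diag L)"
    and "real m * L / (L + real n - 1) \<le> frac_makespan n m (prop_mech n (diag L)) (diag L) (diag L) / opt_frac_makespan n m (diag L)"
proof -
  show v: "valid_times n m (diag L)" using assms unfolding valid_times_def diag_def by auto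
  have n1: "n \<ge> 1" using assms by auto
  have S: "(\<Sum>k<n. inverse (diag L k j)) = 1 + (real n - 1) / L" if j: "j < n" for j
  proof -
    have "(\<Sum>k<n. inverse (diag L k j)) = (\<Sum>k<n. inverse L + (if k = j then 1 - inverse L else 0))"
      unfolding diag_def by (intro sum.cong) auto
    also have "\<dots> = real n * inverse L + (1 - inverse L)"
      using j by (simp add: sum.distrib)
    also have "\<dots> = 1 + (real n - 1) / L" by (simp add: divide_inverse algebra_simps)
    finally show ?thesis .
  qed
  have mk: "frac_makespan n m (prop_mech n (diag L)) (diag L) (diag L) = real m * L / (L + real n - 1)"
  proof -
    have "frac_makespan n m (prop_mech n (diag L)) (diag L) (diag L) = (\<Sum>j<m. 1 / (1 + (real n - 1) / L))"
      using prop_makespan[OF v n1] S assms by (auto intro!: sum.cong)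
    also have "\<dots> = real m * L / (L + real n - 1)" using assms by (simp add: field_simps)
    finally show ?thesis .
  qed
  define \<alpha> where "\<alpha> = (\<lambda>(i::nat) (j::nat). if i = j then 1 else (0::real))"
  have fe: "feasible_alloc n m \<alpha>" unfolding feasible_alloc_def \<alpha>_def using assms
    by (auto simp: sum.delta)
  have "opt_frac_makespan n m (diag L) \<le> Max ((\<lambda>i. \<Sum>j<m. \<alpha> i j * diag L i j) ` {..<n})"
    using opt_le[OF v assms(1) n1 fe] .
  also have "\<dots> \<le> 1"
  proof (rule Max.boundedI)
    show "finite ((\<lambda>i. \<Sum>j<m. \<alpha> i j * diag L i j) ` {..<n})" by simp
    show "(\<lambda>i. \<Sum>j<m. \<alpha> i j * diag L i j) ` {..<n} \<noteq> {}" using n1 by (auto simp: lessThan_empty_iff)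
    fix a assume "a \<in> (\<lambda>i. \<Sum>j<m. \<alpha> i j * diag L i j) ` {..<n}"
    then obtain i where "a = (\<Sum>j<m. \<alpha> i j * diag L i j)" by auto
    moreover have "(\<Sum>j<m. \<alpha> i j * diag L i j) = (\<Sum>j<m. if i = j then 1 else 0)"
      unfolding \<alpha>_def diag_def by (intro sum.cong) auto
    ultimately show "a \<le> 1" by (simp add: sum.delta')
  qed
  finally have o1: "opt_frac_makespan n m (diag L) \<le> 1" .
  have "1 / (\<Sum>k<n. inverse (diag L k 0)) \<le> opt_frac_makespan n m (diag L)"
    using opt_ge[OF v assms(1) n1] .
  moreover have "(\<Sum>k<n. inverse (diag L k 0)) > 0" using S_pos[OF v _ n1] assms by auto
  ultimately have o0: "opt_frac_makespan n m (diag L) > 0"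
    by (meson divide_pos_pos less_le_trans zero_less_one)
  have mk0: "real m * L / (L + real n - 1) \<ge> 0" using assms by simp
  show "real m * L / (L + real n - 1) \<le> frac_makespan n m (prop_mech n (diag L)) (diag L) (diag L) / opt_frac_makespan n m (diag L)"
    unfolding mk using divide_left_mono[OF o1 mk0] o0 by simp
qed


lemma ineq:
  fixes r mm nn :: real
  assumes "r < mm" "nn \<ge> 1"
  defines "L \<equiv> (\<bar>r\<bar> * nn + 1) / (mm - r) + 1"
  shows "L \<ge> 1" "r < mm * L / (L + nn - 1)"
proof -
  have d: "mm - r > 0" using assms by simp
  have q: "(\<bar>r\<bar> * nn + 1) / (mm - r) \<ge> 0" using d assms(2) by (intro divide_nonneg_pos) auto
  show "L \<ge> 1" unfolding L_def using q by simp
  have "(mm - r) * L = \<bar>r\<bar> * nn + 1 + (mm - r)" unfolding L_def using d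
    by (simp add: distrib_left del: times_divide_eq_right) (metis d less_irrefl nonzero_mult_div_cancel_left times_divide_eq_right)
  moreover have "\<bar>r\<bar> * nn \<ge> r * (nn - 1)" using assms(2)
    by (cases "r \<ge> 0") (auto simp: algebra_simps mult_left_mono intro: order_trans[of _ 0])
  ultimately have "r * (L + nn - 1) < mm * L" using d by (simp add: algebra_simps)
  moreover have "L + nn - 1 > 0" using q assms(2) unfolding L_def by linarith
  ultimately show "r < mm * L / (L + nn - 1)" by (simp add: less_divide_eq)
qed

theorem theorem7:
  fixes n m :: nat
  assumes "n \<ge> 1"
  shows "prop_approx_ratio n 1 = 1 \<and>
         (1 \<le> m \<and> m \<le> n \<longrightarrow> ereal (real m) \<le> prop_approx_ratio n m)"
proof (intro conjI impI)
  have ne: "(\<lambda>_ _. 1) \<in> {t. valid_times n 1 t}" unfolding valid_times_def by simp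
  have "prop_approx_ratio n 1 = (SUP t\<in>{t. valid_times n 1 t}. (1::ereal))"
    unfolding prop_approx_ratio_def
  proof (intro SUP_cong refl)
    fix t assume "t \<in> {t. valid_times n 1 t}"
    then have "frac_makespan n 1 (prop_mech n t) t t / opt_frac_makespan n 1 t = 1"
      using part1[of n t] assms by simp
    then show "ereal (frac_makespan n 1 (prop_mech n t) t t / opt_frac_makespan n 1 t) = 1"
      by (simp add: one_ereal_def)
  qed
  also have "\<dots> = 1" using ne by (intro SUP_const) auto
  finally show "prop_approx_ratio n 1 = 1" .
next
  assume mn: "1 \<le> m \<and> m \<le> n"
  show "ereal (real m) \<le> prop_approx_ratio n m"
  proof (rule dense_le)
    fix y assume y: "y < ereal (real m)"
    show "y \<le> prop_approx_ratio n m"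
    proof (cases y)
      case (real r)
      define L where "L = (\<bar>r\<bar> * real n + 1) / (real m - r) + 1"
      have rm: "r < real m" using y real by simp
      have n1: "real n \<ge> 1" using assms by simp
      have L1: "L \<ge> 1" and lt: "r < real m * L / (L + real n - 1)"
        using ineq[OF rm n1] unfolding L_def by auto
      have v: "valid_times n m (diag L)" using part2(1)[of m n L] mn L1 by auto
      have "y \<le> ereal (frac_makespan n m (prop_mech n (diag L)) (diag L) (diag L) / opt_frac_makespan n m (diag L))"
        using real lt part2(2)[of m n L] mn L1 by simp
      also have "\<dots> \<le> prop_approx_ratio n m" unfolding prop_approx_ratio_def
        using v by (intro SUP_upper) auto
      finally show ?thesis .
    next
      case PInf then show ?thesis using y by simp
    next
      case MInf then show ?thesis by simp
    qed
  qed
qed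

end
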